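(* Let $I,J,K$ be a partition of $[m]$ and $\bm a\in\mathbb{R}^m$ with $P(\bm a,I,J,K)\ne\emptyset$, and let $F_{\bm a}$ be the face of $\delta\mathcal{A}_{\bm o}$ whose relative interior contains $\bm a$. Then $P(\bm b,I,J,K)\neq\emptyset$ for every $\bm b\in F_{\bm a}$.
   Context: Fix nonzero $\bm u_1,\dots,\bm u_m\in\mathbb{R}^n$ (repetitions and parallel vectors allowed), $U$ the $m\times n$ matrix with these rows; $U_I$, $\bm a_I$ denote rows/entries indexed by $I$. For a partition $I,J,K$ of $[m]$ (parts may be empty), $P(\bm a,I,J,K)=\{\bm x\in\mathbb{R}^n:U_I\bm x=\bm a_I,\ U_J\bm x\le\bm a_J,\ U_K\bm x\ge\bm a_K\}$. A circuit is a subset $C\subseteq[m]$ with $\{\bm u_i:i\in C\}$ a minimal linearly dependent indexed family; $\bm c^C\in\mathbb{R}^m$ satisfies $\sum c_i\bm u_i=\bm 0$ and $c_i\neq0\iff i\in C$. The derived arrangement $\delta\mathcal{A}_{\bm o}$ consists of the hyperplanes $\langle\bm c^C,\bm y\rangle=0$ in $\mathbb{R}^m$; its open faces are the nonempty sets $\{\bm y:\operatorname{sign}\langle\bm c^C,\bm y\rangle=\epsilon_C\ \forall C\}$ for fixed signs $\epsilon_C$, and its faces are the closures of open faces. Thus $F_{\bm a}$ is the closure of the open face containing $\bm a$. *)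

theory Defs
  imports "HOL-Analysis.Analysis"
begin

text \<open>Rows of U :: real^'n^'m are the vectors u_i (i :: 'm), so [m] is the finite type 'm
  and R^n is real^'n.\<close>

definition polyP :: "real^'n^'m \<Rightarrow> real^'m \<Rightarrow> 'm set \<Rightarrow> 'm set \<Rightarrow> 'm set \<Rightarrow> (real^'n) set" where
  "polyP U a I J K = {x. (\<forall>i\<in>I. U$i \<bullet> x = a$i) \<and> (\<forall>i\<in>J. U$i \<bullet> x \<le> a$i) \<and> (\<forall>i\<in>K. U$i \<bullet> x \<ge> a$i)}"

definition indexed_dependent :: "real^'n^'m \<Rightarrow> 'm set \<Rightarrow> bool" where
  "indexed_dependent U D \<longleftrightarrow> (\<exists>c::'m \<Rightarrow> real. (\<exists>i\<in>D. c i \<noteq> 0) \<and> (\<Sum>i\<in>D. c i *\<^sub>R U$i) = 0)"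

definition circuit :: "real^'n^'m \<Rightarrow> 'm set \<Rightarrow> bool" where
  "circuit U C \<longleftrightarrow> indexed_dependent U C \<and> (\<forall>D. D \<subset> C \<longrightarrow> \<not> indexed_dependent U D)"

definition circuit_vectors :: "real^'n^'m \<Rightarrow> ('m set \<Rightarrow> real^'m) \<Rightarrow> bool" where
  "circuit_vectors U cC \<longleftrightarrow> (\<forall>C. circuit U C \<longrightarrow>
      (\<forall>i. cC C $ i \<noteq> 0 \<longleftrightarrow> i \<in> C) \<and> (\<Sum>i\<in>UNIV. cC C $ i *\<^sub>R U$i) = 0)"

text \<open>Open face of the derived arrangement containing a, and its closure F_a.\<close>
definition open_face :: "real^'n^'m \<Rightarrow> ('m set \<Rightarrow> real^'m) \<Rightarrow> real^'m \<Rightarrow> (real^'m) set" where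
  "open_face U cC a = {y. \<forall>C. circuit U C \<longrightarrow> sgn (cC C \<bullet> y) = sgn (cC C \<bullet> a)}"

definition face_of_point :: "real^'n^'m \<Rightarrow> ('m set \<Rightarrow> real^'m) \<Rightarrow> real^'m \<Rightarrow> (real^'m) set" where
  "face_of_point U cC a = closure (open_face U cC a)"

end

theory Submission
  imports Defs
begin

definition dualc :: "real^'n^'m \<Rightarrow> 'm set \<Rightarrow> 'm set \<Rightarrow> (real^'m) set" where
  "dualc U J K = {y. (\<Sum>i\<in>UNIV. y$i *\<^sub>R U$i) = 0 \<and> (\<forall>j\<in>J. y$j \<ge> 0) \<and> (\<forall>k\<in>K. y$k \<le> 0)}"

lemma feas_cone:
  fixes U :: "real^'n^'m"
  shows "convex_cone {z. polyP U z I J K \<noteq> {}}"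
  unfolding convex_cone_iff
proof (intro conjI ballI allI impI)
  show "0 \<in> {z. polyP U z I J K \<noteq> {}}"
    by (auto simp: polyP_def intro!: exI[of _ 0])
next
  fix z w assume "z \<in> {z. polyP U z I J K \<noteq> {}}" "w \<in> {z. polyP U z I J K \<noteq> {}}"
  then obtain x y where x: "x \<in> polyP U z I J K" and y: "y \<in> polyP U w I J K" by auto
  have "x + y \<in> polyP U (z + w) I J K"
    using x y by (auto simp: polyP_def inner_add_right add_mono)
  then show "z + w \<in> {z. polyP U z I J K \<noteq> {}}" by auto
next
  fix z and c :: real assume "z \<in> {z. polyP U z I J K \<noteq> {}}" "0 \<le> c"
  then obtain x where x: "x \<in> polyP U z I J K" by auto
  have "c *\<^sub>R x \<in> polyP U (c *\<^sub>R z) I J K"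
    using x \<open>0 \<le> c\<close> by (auto simp: polyP_def mult_left_mono)
  then show "c *\<^sub>R z \<in> {z. polyP U z I J K \<noteq> {}}" by auto
qed

lemma farkas:
  fixes U :: "real^'n^'m" and b :: "real^'m"
  assumes part: "I \<inter> J = {}" "I \<inter> K = {}" "J \<inter> K = {}"
    and H: "\<forall>y\<in>dualc U J K. y \<bullet> b \<ge> 0"
  shows "polyP U b I J K \<noteq> {}"
proof (rule ccontr)
  assume nb: "\<not> polyP U b I J K \<noteq> {}"
  define T where "T = {z. polyP U z I J K \<noteq> {}}"
  define col where "col k = (\<chi> i. U$i$k)" for k
  define G where "G = range col \<union> range (\<lambda>k. - col k) \<union> (\<lambda>j. axis j 1) ` J \<union> (\<lambda>k. - axis k (1::real)) ` K"
  have fG: "finite G" unfolding G_def by auto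
  have GT: "G \<subseteq> T"
  proof
    fix g assume "g \<in> G"
    then consider k where "g = col k" | k where "g = - col k" | j where "j \<in> J" "g = axis j 1"
      | k where "k \<in> K" "g = - axis k 1" unfolding G_def by blast
    then show "g \<in> T"
    proof cases
      case 1
      have "axis k 1 \<in> polyP U g I J K" using 1
        by (auto simp: polyP_def col_def inner_axis)
      then show ?thesis unfolding T_def by auto
    next
      case 2
      have "axis k (-1) \<in> polyP U g I J K" using 2
        by (auto simp: polyP_def col_def inner_axis)
      then show ?thesis unfolding T_def by auto
    next
      case 3
      have "0 \<in> polyP U g I J K" using 3 part
        by (auto simp: polyP_def axis_def)
      then show ?thesis unfolding T_def by blast
    next
      case 4
      have "0 \<in> polyP U g I J K" using 4 part
        by (auto simp: polyP_def axis_def)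
      then show ?thesis unfolding T_def by blast
    qed
  qed
  have HT: "convex_cone hull G \<subseteq> T"
    using GT feas_cone[of U I J K] unfolding T_def by (intro hull_minimal) auto
  have "b \<notin> convex_cone hull G" using HT nb unfolding T_def by auto
  moreover have "convex (convex_cone hull G)"
    using convex_cone_convex_cone_hull[of G] unfolding convex_cone_def by blast
  moreover have "closed (convex_cone hull G)" using closed_convex_cone_hull fG by blast
  ultimately obtain w d where wd: "w \<bullet> b < d" "\<forall>z\<in>convex_cone hull G. w \<bullet> z > d"
    using separating_hyperplane_closed_point by blast
  have d0: "d < 0" using wd(2) convex_cone_hull_contains_0 by fastforce
  have wg: "w \<bullet> g \<ge> 0" if "g \<in> G" for g
  proof (rule ccontr)
    assume "\<not> w \<bullet> g \<ge> 0"
    then have neg: "w \<bullet> g < 0" by simp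
    define r where "r = d / (w \<bullet> g)"
    have "r \<ge> 0" unfolding r_def using neg d0 by (simp add: divide_nonpos_neg)
    then have "r *\<^sub>R g \<in> convex_cone hull G"
      using that hull_subset[of G convex_cone] convex_cone_hull_mul by blast
    then have "w \<bullet> (r *\<^sub>R g) > d" using wd(2) by blast
    moreover have "w \<bullet> (r *\<^sub>R g) = d" unfolding r_def using neg by simp
    ultimately show False by simp
  qed
  have "w \<in> dualc U J K"
    unfolding dualc_def
  proof (intro CollectI conjI ballI)
    show "(\<Sum>i\<in>UNIV. w$i *\<^sub>R U$i) = 0"
    proof (subst vec_eq_iff, intro allI)
      fix k
      have e: "w \<bullet> col k = (\<Sum>i\<in>UNIV. w$i * U$i$k)"
        by (simp add: inner_vec_def col_def)
      have "col k \<in> G" "- col k \<in> G" unfolding G_def by auto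
      then have "w \<bullet> col k \<ge> 0" "w \<bullet> (- col k) \<ge> 0" using wg by blast+
      then have "w \<bullet> col k = 0" by simp
      then show "(\<Sum>i\<in>UNIV. w$i *\<^sub>R U$i) $ k = 0 $ k" using e by simp
    qed
  next
    fix j assume "j \<in> J"
    then have "w \<bullet> axis j 1 \<ge> 0" using wg unfolding G_def by auto
    then show "w$j \<ge> 0" by (simp add: inner_axis)
  next
    fix k assume "k \<in> K"
    then have "- axis k 1 \<in> G" unfolding G_def by auto
    then have "w \<bullet> (- axis k 1) \<ge> 0" using wg by blast
    then show "w$k \<le> 0" by (simp add: inner_axis)
  qed
  then have "w \<bullet> b \<ge> 0" using H by blast
  then show False using wd(1) d0 by simp
qed

lemma dual_a:
  fixes U :: "real^'n^'m"
  assumes part: "I \<union> J \<union> K = UNIV"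
    and y: "y \<in> dualc U J K" and x: "x \<in> polyP U a I J K"
  shows "y \<bullet> a \<ge> 0"
proof -
  have k: "(\<Sum>i\<in>UNIV. y$i * (U$i \<bullet> x)) = 0"
  proof -
    have "(\<Sum>i\<in>UNIV. y$i * (U$i \<bullet> x)) = (\<Sum>i\<in>UNIV. y$i *\<^sub>R U$i) \<bullet> x"
      by (simp add: inner_sum_left)
    then show ?thesis using y by (simp add: dualc_def)
  qed
  have "y \<bullet> a = (\<Sum>i\<in>UNIV. y$i * a$i)" by (simp add: inner_vec_def)
  also have "\<dots> = (\<Sum>i\<in>UNIV. y$i * (a$i - U$i \<bullet> x))"
    using k by (simp add: right_diff_distrib sum_subtractf)
  also have "\<dots> \<ge> 0"
  proof (rule sum_nonneg)
    fix i :: 'm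
    have "i \<in> I \<or> i \<in> J \<or> i \<in> K" using part by blast
    moreover have "i \<in> I \<Longrightarrow> U$i \<bullet> x = a$i" "i \<in> J \<Longrightarrow> U$i \<bullet> x \<le> a$i" "i \<in> K \<Longrightarrow> U$i \<bullet> x \<ge> a$i"
      using x unfolding polyP_def by blast+
    moreover have "i \<in> J \<Longrightarrow> y$i \<ge> 0" "i \<in> K \<Longrightarrow> y$i \<le> 0"
      using y unfolding dualc_def by blast+
    ultimately show "0 \<le> y$i * (a$i - U$i \<bullet> x)"
      by (elim disjE) (simp_all add: mult_nonneg_nonneg mult_nonpos_nonpos)
  qed
  finally show ?thesis .
qed

lemma step_lemma:
  fixes y c :: "real^'m"
  assumes sub: "\<forall>j. y$j = 0 \<longrightarrow> c$j = 0" and ne: "\<exists>j. c$j * y$j > 0"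
  obtains t where "t > 0"
    "\<forall>j. (y$j \<ge> 0 \<longrightarrow> (y - t *\<^sub>R c)$j \<ge> 0) \<and> (y$j \<le> 0 \<longrightarrow> (y - t *\<^sub>R c)$j \<le> 0)"
    "\<exists>j. y$j \<noteq> 0 \<and> (y - t *\<^sub>R c)$j = 0"
proof -
  define P where "P = {j. c$j * y$j > 0}"
  define t where "t = Min ((\<lambda>j. y$j / c$j) ` P)"
  have fP: "finite P" and neP: "P \<noteq> {}" using ne unfolding P_def by auto
  have pos: "y$j / c$j > 0" if "j \<in> P" for j
    using that unfolding P_def by (auto simp: zero_less_mult_iff zero_less_divide_iff)
  have tle: "t \<le> y$j / c$j" if "j \<in> P" for j
    unfolding t_def using fP that by simp
  have "t \<in> (\<lambda>j. y$j / c$j) ` P" unfolding t_def using fP neP by simp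
  then obtain j0 where j0: "j0 \<in> P" "t = y$j0 / c$j0" by blast
  have tpos: "t > 0" using pos j0 by simp
  have "\<forall>j. (y$j \<ge> 0 \<longrightarrow> (y - t *\<^sub>R c)$j \<ge> 0) \<and> (y$j \<le> 0 \<longrightarrow> (y - t *\<^sub>R c)$j \<le> 0)"
  proof (intro allI)
    fix j
    show "(y$j \<ge> 0 \<longrightarrow> (y - t *\<^sub>R c)$j \<ge> 0) \<and> (y$j \<le> 0 \<longrightarrow> (y - t *\<^sub>R c)$j \<le> 0)"
    proof (cases "j \<in> P")
      case True
      then have le: "t \<le> y$j / c$j" by (rule tle)
      from True have cy: "c$j * y$j > 0" unfolding P_def by simp
      show ?thesis
      proof (cases "c$j > 0")
        case True
        then have "y$j > 0" using cy by (simp add: zero_less_mult_iff)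
        moreover have "t * c$j \<le> y$j" using le True by (simp add: pos_le_divide_eq)
        ultimately show ?thesis by simp
      next
        case False
        then have cn: "c$j < 0" using cy by (cases "c$j = 0") auto
        then have "y$j < 0" using cy by (simp add: zero_less_mult_iff)
        moreover have "t * c$j \<ge> y$j" using le cn by (simp add: neg_le_divide_eq)
        ultimately show ?thesis by simp
      qed
    next
      case False
      then have cy: "c$j * y$j \<le> 0" unfolding P_def by simp
      consider "y$j = 0" | "y$j > 0" | "y$j < 0" by linarith
      then show ?thesis
      proof cases
        case 1 then show ?thesis using sub by simp
      next
        case 2
        then have "c$j \<le> 0" using cy by (simp add: mult_le_0_iff)
        then have "t * c$j \<le> 0" using tpos by (simp add: mult_nonneg_nonpos)
        then show ?thesis using 2 by simp
      next
        case 3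
        then have "c$j \<ge> 0" using cy by (simp add: mult_le_0_iff)
        then have "t * c$j \<ge> 0" using tpos by simp
        then show ?thesis using 3 by simp
      qed
    qed
  qed
  moreover have "y$j0 \<noteq> 0 \<and> (y - t *\<^sub>R c)$j0 = 0"
    using j0 unfolding P_def by auto
  ultimately show ?thesis using that tpos by blast
qed

lemma circuit_exists:
  fixes U :: "real^'n^'m"
  shows "indexed_dependent U D \<Longrightarrow> \<exists>C\<subseteq>D. circuit U C"
proof (induction "card D" arbitrary: D rule: less_induct)
  case less
  show ?case
  proof (cases "circuit U D")
    case True then show ?thesis by blast
  next
    case False
    then obtain D' where "D' \<subset> D" "indexed_dependent U D'"
      using less.prems unfolding circuit_def by blast
    moreover have "card D' < card D" using \<open>D' \<subset> D\<close> by (simp add: psubset_card_mono)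
    ultimately obtain C where "C \<subseteq> D'" "circuit U C" using less.hyps by meson
    then show ?thesis using \<open>D' \<subset> D\<close> by blast
  qed
qed

lemma conf_dual:
  fixes U :: "real^'n^'m"
  shows "y \<in> dualc U J K \<Longrightarrow> (\<Sum>i\<in>UNIV. z$i *\<^sub>R U$i) = 0 \<Longrightarrow>
    \<forall>j. (y$j \<ge> 0 \<longrightarrow> z$j \<ge> 0) \<and> (y$j \<le> 0 \<longrightarrow> z$j \<le> 0) \<Longrightarrow> z \<in> dualc U J K"
  unfolding dualc_def by auto

lemma ker_comb:
  fixes U :: "real^'n^'m"
  assumes "(\<Sum>i\<in>UNIV. y$i *\<^sub>R U$i) = 0" "(\<Sum>i\<in>UNIV. c$i *\<^sub>R U$i) = 0"
  shows "(\<Sum>i\<in>UNIV. (y - s *\<^sub>R c)$i *\<^sub>R U$i) = 0"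
proof -
  have "(\<Sum>i\<in>UNIV. (y - s *\<^sub>R c)$i *\<^sub>R U$i) = (\<Sum>i\<in>UNIV. y$i *\<^sub>R U$i) - s *\<^sub>R (\<Sum>i\<in>UNIV. c$i *\<^sub>R U$i)"
    by (simp add: scaleR_diff_left sum_subtractf scaleR_sum_right)
  then show ?thesis using assms by simp
qed

lemma card_less:
  fixes y z :: "real^'m"
  assumes "\<forall>j. y$j = 0 \<longrightarrow> z$j = 0" "\<exists>j. y$j \<noteq> 0 \<and> z$j = 0"
  shows "card {i. z$i \<noteq> 0} < card {i. y$i \<noteq> 0}"
  by (rule psubset_card_mono) (use assms in auto)

lemma dual_nonneg:
  fixes U :: "real^'n^'m" and cC :: "'m set \<Rightarrow> real^'m" and b :: "real^'m"
  assumes cvec: "circuit_vectors U cC"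
    and H: "\<forall>C c. circuit U C \<longrightarrow> (c = cC C \<or> c = - cC C) \<longrightarrow> c \<in> dualc U J K \<longrightarrow> c \<bullet> b \<ge> 0"
  shows "y \<in> dualc U J K \<Longrightarrow> y \<bullet> b \<ge> 0"
proof (induction "card {i. y$i \<noteq> 0}" arbitrary: y rule: less_induct)
  case less
  show ?case
  proof (cases "y = 0")
    case True then show ?thesis by simp
  next
    case False
    define D where "D = {i. y$i \<noteq> 0}"
    have yk: "(\<Sum>i\<in>UNIV. y$i *\<^sub>R U$i) = 0" using less.prems by (simp add: dualc_def)
    have "indexed_dependent U D"
      unfolding indexed_dependent_def
    proof (intro exI[of _ "\<lambda>i. y$i"] conjI)
      show "\<exists>i\<in>D. y$i \<noteq> 0" using False by (auto simp: D_def vec_eq_iff)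
      have "(\<Sum>i\<in>D. y$i *\<^sub>R U$i) = (\<Sum>i\<in>UNIV. y$i *\<^sub>R U$i)"
        by (rule sum.mono_neutral_left) (auto simp: D_def)
      then show "(\<Sum>i\<in>D. y$i *\<^sub>R U$i) = 0" using yk by simp
    qed
    then obtain C where CD: "C \<subseteq> D" and circ: "circuit U C" using circuit_exists by blast
    have c0: "\<forall>i. cC C $ i \<noteq> 0 \<longleftrightarrow> i \<in> C" "(\<Sum>i\<in>UNIV. cC C $ i *\<^sub>R U$i) = 0"
      using cvec circ unfolding circuit_vectors_def by blast+
    have "C \<noteq> {}" using circ unfolding circuit_def indexed_dependent_def by auto
    then obtain i0 where i0: "i0 \<in> C" by blast
    define c where "c = (if cC C $ i0 * y$i0 > 0 then cC C else - cC C)"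
    have cpm: "c = cC C \<or> c = - cC C" unfolding c_def by auto
    have csupp: "\<forall>i. c$i \<noteq> 0 \<longleftrightarrow> i \<in> C" using c0(1) unfolding c_def by auto
    have ck: "(\<Sum>i\<in>UNIV. c$i *\<^sub>R U$i) = 0" using c0(2) unfolding c_def by (auto simp: sum_negf)
    have nz: "cC C $ i0 * y$i0 \<noteq> 0" using i0 c0(1) CD D_def by auto
    have ci0: "c$i0 * y$i0 > 0" unfolding c_def using nz[unfolded linorder_neq_iff] by auto
    have sub: "\<forall>j. y$j = 0 \<longrightarrow> c$j = 0" using csupp CD D_def by auto
    obtain t where t: "t > 0"
      "\<forall>j. (y$j \<ge> 0 \<longrightarrow> (y - t *\<^sub>R c)$j \<ge> 0) \<and> (y$j \<le> 0 \<longrightarrow> (y - t *\<^sub>R c)$j \<le> 0)"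
      "\<exists>j. y$j \<noteq> 0 \<and> (y - t *\<^sub>R c)$j = 0"
      using step_lemma[OF sub] ci0 by blast
    define y' where "y' = y - t *\<^sub>R c"
    have y'd: "y' \<in> dualc U J K"
      using conf_dual[OF less.prems ker_comb[OF yk ck] t(2)] unfolding y'_def .
    have "\<forall>j. y$j = 0 \<longrightarrow> y'$j = 0"
    proof (intro allI impI)
      fix j assume h: "y$j = 0"
      have "(0 \<le> y$j \<longrightarrow> 0 \<le> y'$j) \<and> (y$j \<le> 0 \<longrightarrow> y'$j \<le> 0)" using t(2) unfolding y'_def by blast
      then have "0 \<le> y'$j" "y'$j \<le> 0" using h by simp_all
      then show "y'$j = 0" by simp
    qed
    then have "card {i. y'$i \<noteq> 0} < card {i. y$i \<noteq> 0}"
      using card_less t(3) unfolding y'_def by blast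
    then have y'b: "y' \<bullet> b \<ge> 0" using less.hyps y'd by blast
    show ?thesis
    proof (cases "\<exists>j. c$j * y$j < 0")
      case True
      have sub': "\<forall>j. y$j = 0 \<longrightarrow> (-c)$j = 0" using sub by simp
      have ne': "\<exists>j. (-c)$j * y$j > 0" using True by simp
      obtain s where s: "s > 0"
        "\<forall>j. (y$j \<ge> 0 \<longrightarrow> (y - s *\<^sub>R (-c))$j \<ge> 0) \<and> (y$j \<le> 0 \<longrightarrow> (y - s *\<^sub>R (-c))$j \<le> 0)"
        "\<exists>j. y$j \<noteq> 0 \<and> (y - s *\<^sub>R (-c))$j = 0"
        using step_lemma[OF sub' ne'] by blast
      have ck': "(\<Sum>i\<in>UNIV. (-c)$i *\<^sub>R U$i) = 0" using ck by (simp add: sum_negf)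
      define y'' where "y'' = y - s *\<^sub>R (-c)"
      have y''d: "y'' \<in> dualc U J K"
        using conf_dual[OF less.prems ker_comb[OF yk ck'] s(2)] unfolding y''_def .
      have "\<forall>j. y$j = 0 \<longrightarrow> y''$j = 0"
    proof (intro allI impI)
      fix j assume h: "y$j = 0"
      have "(0 \<le> y$j \<longrightarrow> 0 \<le> y''$j) \<and> (y$j \<le> 0 \<longrightarrow> y''$j \<le> 0)" using s(2) unfolding y''_def by blast
      then have "0 \<le> y''$j" "y''$j \<le> 0" using h by simp_all
      then show "y''$j = 0" by simp
    qed
      then have "card {i. y''$i \<noteq> 0} < card {i. y$i \<noteq> 0}"
        using card_less s(3) unfolding y''_def by blast
      then have y''b: "y'' \<bullet> b \<ge> 0" using less.hyps y''d by blast
      have eq: "(s + t) *\<^sub>R y = s *\<^sub>R y' + t *\<^sub>R y''"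
        unfolding y'_def y''_def by (simp add: algebra_simps)
      have "(s + t) * (y \<bullet> b) = s * (y' \<bullet> b) + t * (y'' \<bullet> b)"
        using arg_cong[OF eq, of "\<lambda>v. v \<bullet> b"] by (simp add: inner_add_left)
      also have "\<dots> \<ge> 0" using s(1) t(1) y'b y''b by simp
      finally show ?thesis using s(1) t(1) by (simp add: zero_le_mult_iff)
    next
      case False
      have "\<forall>j. (y$j \<ge> 0 \<longrightarrow> c$j \<ge> 0) \<and> (y$j \<le> 0 \<longrightarrow> c$j \<le> 0)"
      proof
        fix j
        have "c$j * y$j \<ge> 0" using False by (simp add: not_less)
        then show "(y$j \<ge> 0 \<longrightarrow> c$j \<ge> 0) \<and> (y$j \<le> 0 \<longrightarrow> c$j \<le> 0)"
          using sub by (cases "y$j = 0") (auto simp: zero_le_mult_iff)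
      qed
      then have "c \<in> dualc U J K" using conf_dual[OF less.prems ck] by blast
      then have cb: "c \<bullet> b \<ge> 0" using H circ cpm by blast
      have "y = y' + t *\<^sub>R c" unfolding y'_def by simp
      then have "y \<bullet> b = y' \<bullet> b + t * (c \<bullet> b)" by (metis inner_add_left inner_scaleR_left)
      then show ?thesis using y'b cb t(1) by simp
    qed
  qed
qed

theorem mainTheorem5:
  fixes U :: "real^'n^'m" and cC :: "'m set \<Rightarrow> real^'m"
    and a b :: "real^'m" and I J K :: "'m set"
  assumes nonzero: "\<forall>i. U$i \<noteq> 0"
    and cvec: "circuit_vectors U cC"
    and part: "I \<union> J \<union> K = UNIV" "I \<inter> J = {}" "I \<inter> K = {}" "J \<inter> K = {}"
    and feas: "polyP U a I J K \<noteq> {}"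
    and bF: "b \<in> face_of_point U cC a"
  shows "polyP U b I J K \<noteq> {}"
proof -
  obtain x where x: "x \<in> polyP U a I J K" using feas by blast
  have H: "c \<bullet> b \<ge> 0" if circ: "circuit U C" and cpm: "c = cC C \<or> c = - cC C"
    and cd: "c \<in> dualc U J K" for C c
  proof -
    have ca: "c \<bullet> a \<ge> 0" using dual_a[OF part(1) cd x] .
    have "open_face U cC a \<subseteq> {z. c \<bullet> z \<ge> 0}"
    proof
      fix z assume "z \<in> open_face U cC a"
      then have sg: "sgn (cC C \<bullet> z) = sgn (cC C \<bullet> a)" using circ unfolding open_face_def by blast
      show "z \<in> {z. c \<bullet> z \<ge> 0}"
        using cpm
      proof
        assume "c = cC C"
        then show ?thesis using sg ca by (auto simp: sgn_if split: if_splits)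
      next
        assume "c = - cC C"
        then show ?thesis using sg ca by (auto simp: sgn_if split: if_splits)
      qed
    qed
    then have "closure (open_face U cC a) \<subseteq> {z. c \<bullet> z \<ge> 0}"
      by (rule closure_minimal) (rule closed_halfspace_ge)
    then show ?thesis using bF unfolding face_of_point_def by blast
  qed
  have "\<forall>y\<in>dualc U J K. y \<bullet> b \<ge> 0"
  proof
    fix y
    assume yd: "y \<in> dualc U J K"
    have H': "\<forall>C c. circuit U C \<longrightarrow> (c = cC C \<or> c = - cC C) \<longrightarrow> c \<in> dualc U J K \<longrightarrow> c \<bullet> b \<ge> 0"
      using H by blast
    show "y \<bullet> b \<ge> 0" by (rule dual_nonneg[OF cvec H' yd])
  qed
  then show ?thesis using farkas part(2-4) by blast
qed

end
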